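(* Let $p$ be a prime, $w\ge1$, and $\mu\ge1$ an integer with $2^\mu<p$. Let $C\subseteq\mathbb{F}_{p^w}^n$ be a linear $[n,k]$ code whose dual code $C^\perp$ has minimum distance $d^\perp$. Let $\boldsymbol\tau=(\tau^{(1)},\dots,\tau^{(n)})$ be any family of functions $\tau^{(j)}:\mathbb{F}_{p^w}\to\{0,1\}^\mu$, and let $c_\mu=\frac{2^\mu\sin(\pi/2^\mu)}{p\sin(\pi/p)}$. Then \[ SD(\boldsymbol\tau(C),\boldsymbol\tau(\mathcal U_n))\le\frac12\,p^{w(n-k)}\,c_\mu^{d^\perp}. \]
   Context: For $S\subseteq\mathbb{F}_{p^w}^n$, $\boldsymbol\tau(S)$ is the distribution of $(\tau^{(1)}(x_1),\dots,\tau^{(n)}(x_n))$ with $\mathbf x$ uniform on $S$; $\mathcal U_n=\mathbb{F}_{p^w}^n$. $SD(X,Y)=\frac12\sum_z|\Pr[X=z]-\Pr[Y=z]|$. *)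

theory Defs
  imports "HOL-Analysis.Analysis" "HOL-Probability.Probability"
begin

definition hweight :: "'a::zero ^ 'n \<Rightarrow> nat" where
  "hweight x = card {i. x $ i \<noteq> 0}"

definition dual_code :: "('a::field ^ 'n) set \<Rightarrow> ('a ^ 'n) set" where
  "dual_code C = {y. \<forall>x\<in>C. (\<Sum>i\<in>UNIV. x $ i * y $ i) = 0}"

(* minimum distance of a linear code = minimum weight of a nonzero codeword;
   convention: n+1 if the code is {0} (standing in for +infinity) *)
definition min_dist :: "('a::zero ^ 'n) set \<Rightarrow> nat" where
  "min_dist S = (if S - {0} = {} then CARD('n) + 1 else Min (hweight ` (S - {0})))"

definition tau_dist :: "('n \<Rightarrow> 'a \<Rightarrow> 'b) \<Rightarrow> ('a ^ 'n) set \<Rightarrow> ('n \<Rightarrow> 'b) pmf" where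
  "tau_dist \<tau> S = map_pmf (\<lambda>x. (\<lambda>j. \<tau> j (x $ j))) (pmf_of_set S)"

definition SD :: "'b pmf \<Rightarrow> 'b pmf \<Rightarrow> real" where
  "SD X Y = (1/2) * (\<Sum>z\<in>set_pmf X \<union> set_pmf Y. \<bar>pmf X z - pmf Y z\<bar>)"

end

theory Submission
  imports Defs "HOL-Number_Theory.Number_Theory" "HOL-Computational_Algebra.Polynomial"
begin


lemma sin_concave: "concave_on {0..pi} sin"
proof (rule f''_le0_imp_concave[where f'=cos and f''="\<lambda>x. - sin x"])
  show "convex {0..pi}" by simp
  show "\<And>x. x \<in> {0..pi} \<Longrightarrow> DERIV sin x :> cos x" by (rule DERIV_sin)
  show "\<And>x. x \<in> {0..pi} \<Longrightarrow> DERIV cos x :> - sin x" by (rule DERIV_cos)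
  show "\<And>x. x \<in> {0..pi} \<Longrightarrow> - sin x \<le> 0" by (auto intro: sin_ge_zero)
qed

lemma sin_div_mono:
  assumes "0 < z" "z \<le> y" "y \<le> pi"
  shows "sin y / y \<le> sin z / z"
proof -
  define t where "t = z / y"
  have t: "0 \<le> t" "t \<le> 1" using assms by (auto simp: t_def)
  have "(1 - t) * sin 0 + t * sin y \<le> sin ((1 - t) *\<^sub>R 0 + t *\<^sub>R y)"
    by (rule concave_onD[OF sin_concave]) (use t assms in auto)
  also have "(1 - t) *\<^sub>R 0 + t *\<^sub>R y = z" using assms by (simp add: t_def)
  finally have "z / y * sin y \<le> sin z" by (simp add: t_def)
  thus ?thesis using assms by (simp add: field_simps)
qed

lemma xsin_mono:
  fixes a b :: real
  assumes "1 \<le> a" "a \<le> b"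
  shows "a * sin (pi / a) \<le> b * sin (pi / b)"
proof -
  have "sin (pi/a) / (pi/a) \<le> sin (pi/b) / (pi/b)"
    by (rule sin_div_mono) (use assms in \<open>auto simp: field_simps\<close>)
  thus ?thesis using assms pi_gt_zero by (simp add: field_simps)
qed

lemma sin_jensen:
  fixes a :: "'i \<Rightarrow> real"
  assumes "finite S" "S \<noteq> {}" "\<And>i. i \<in> S \<Longrightarrow> 0 \<le> a i" "(\<Sum>i\<in>S. a i) = 1"
  shows "(\<Sum>i\<in>S. sin (pi * a i)) \<le> real (card S) * sin (pi / real (card S))"
proof -
  let ?N = "real (card S)"
  have N: "?N > 0" using assms by (simp add: card_gt_0_iff)
  have ai: "a i \<le> 1" if "i \<in> S" for i
  proof -
    have "a i \<le> (\<Sum>i\<in>S. a i)" by (rule member_le_sum) (use assms that in auto)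
    thus ?thesis using assms by simp
  qed
  have "(\<lambda>x. - sin x) (\<Sum>i\<in>S. (1/?N) *\<^sub>R (pi * a i)) \<le> (\<Sum>i\<in>S. (1/?N) * (\<lambda>x. - sin x) (pi * a i))"
    by (rule convex_on_sum[where C="{0..pi}"])
       (use assms N sin_concave ai in \<open>auto simp: concave_on_def\<close>)
  moreover have "(\<Sum>i\<in>S. (1/?N) *\<^sub>R (pi * a i)) = pi / ?N"
    using assms by (simp add: sum_divide_distrib[symmetric] sum_distrib_left[symmetric])
  ultimately have "(1/?N) * (\<Sum>i\<in>S. sin (pi * a i)) \<le> sin (pi / ?N)"
    by (simp add: sum_distrib_left sum_negf)
  thus ?thesis using N by (simp add: field_simps)
qed

lemma sin_sub_sin: "sin (X + h) - sin (X - h) = 2 * cos X * sin (h::real)"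
  by (simp add: sin_add sin_diff)

lemma cos_sum_tele:
  "2 * sin (d/2) * (\<Sum>j<a. cos (f + real j * d)) = sin (f + (real a - 1/2)*d) - sin (f - d/2)"
proof (induction a)
  case 0 then show ?case by simp
next
  case (Suc a)
  have "2 * sin (d/2) * cos (f + real a * d) = sin (f + (real a + 1/2)*d) - sin (f + (real a - 1/2)*d)"
    using sin_sub_sin[of "f + real a * d" "d/2"] by (simp add: algebra_simps)
  with Suc show ?case by (simp add: algebra_simps)
qed

lemma cos_sum_bound:
  assumes "sin (d/2) > 0" "sin (real a * d / 2) \<ge> 0"
  shows "(\<Sum>j<a. cos (f + real j * d)) \<le> sin (real a * d / 2) / sin (d/2)"
proof -
  have "2 * sin (d/2) * (\<Sum>j<a. cos (f + real j * d)) = 2 * cos (f + (real a - 1) * d / 2) * sin (real a * d / 2)"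
  proof -
    have e1: "f + (real a - 1/2)*d = f + (real a - 1) * d / 2 + real a * d / 2" by (simp add: field_simps)
    have e2: "f - d/2 = f + (real a - 1) * d / 2 - real a * d / 2" by (simp add: diff_divide_distrib algebra_simps)
    show ?thesis unfolding cos_sum_tele e1 e2 sin_sub_sin by simp
  qed
  also have "\<dots> \<le> 2 * sin (real a * d / 2)"
    using assms(2) mult_right_mono[OF cos_le_one assms(2)] by simp
  finally show ?thesis using assms by (simp add: field_simps)
qed


lemma cos_shift_int: "cos (x + 2 * pi * of_int k) = cos x"
  by (simp add: cos_add)

lemma exchange_sum:
  fixes h :: "'x \<Rightarrow> real"
  assumes "finite B" "finite R" "card B = card R"
    and "\<And>x. x \<in> R \<Longrightarrow> l \<le> h x" "\<And>x. x \<in> B - R \<Longrightarrow> h x \<le> l"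
  shows "sum h B \<le> sum h R"
proof -
  have cB: "card (B - R) = card B - card (B \<inter> R)" using assms by (metis card_Diff_subset_Int finite_Int)
  have cR: "card (R - B) = card R - card (B \<inter> R)" using assms by (metis Int_commute card_Diff_subset_Int finite_Int)
  have e1: "sum h B = sum h (B \<inter> R) + sum h (B - R)" using assms by (metis Diff_Diff_Int Int_Diff_Un Int_commute finite_Int sum.union_disjoint Diff_disjoint inf_commute sum.Int_Diff)
  have e2: "sum h R = sum h (B \<inter> R) + sum h (R - B)" using assms by (metis inf_commute sum.Int_Diff)
  have "sum h (B - R) \<le> of_nat (card (B - R)) * l" using sum_bounded_above[of "B - R" h l] assms(5) by auto
  moreover have "of_nat (card (R - B)) * l \<le> sum h (R - B)" using sum_bounded_below[of "R - B" l h] assms(4) by auto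
  ultimately show ?thesis using e1 e2 cB cR assms(3) by simp
qed

lemma arc_bound:
  fixes p :: nat and B :: "nat set" and th :: real
  assumes p2: "p \<ge> 2" and Bp: "B \<subseteq> {..<p}"
  shows "(\<Sum>r\<in>B. cos (2*pi*real r/real p - th)) \<le> sin (pi*real (card B)/real p) / sin (pi/real p)"
proof -
  define P where "P = real p"
  have P: "P \<ge> 2" using p2 by (simp add: P_def)
  define a where "a = card B"
  have finB: "finite B" using Bp finite_subset by blast
  have ap: "a \<le> p" unfolding a_def using card_mono[OF _ Bp] by simp
  define t where "t = th * P / (2*pi)"
  define h where "h x = cos (2*pi*(x - t)/P)" for x :: real
  have hB: "cos (2*pi*real r/real p - th) = h (real r)" for r
  proof -
    have "2*pi*real r/real p - th = 2*pi*(real r - th * P / (2*pi))/P"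
      using P P_def pi_gt_zero by (simp add: field_simps)
    thus ?thesis unfolding h_def t_def by simp
  qed
  have hper: "h (real_of_int j - P * real_of_int k) = h (real_of_int j)" for j k
  proof -
    have "2*pi*(real_of_int j - P * real_of_int k - t)/P = 2*pi*(real_of_int j - t)/P + 2*pi * of_int (-k)"
      using P by (simp add: field_simps)
    thus ?thesis unfolding h_def by (simp only: cos_shift_int)
  qed
  have habs: "h x = cos (2*pi*\<bar>x - t\<bar>/P)" for x
  proof -
    have "2*pi*\<bar>x - t\<bar>/P = \<bar>2*pi*(x - t)/P\<bar>" using P by (simp add: abs_mult)
    thus ?thesis unfolding h_def by (simp only: cos_abs_real)
  qed
  define c :: int where "c = \<lceil>t - real a/2\<rceil>"
  have c1: "t - real a/2 \<le> c" "c < t - real a/2 + 1" unfolding c_def by linarith+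
  define l where "l = cos (pi * real a / P)"
  define R where "R = (\<lambda>i. nat ((c + int i) mod int p)) ` {..<a}"
  have injR: "inj_on (\<lambda>i. nat ((c + int i) mod int p)) {..<a}"
  proof
    fix i j assume ij: "i \<in> {..<a}" "j \<in> {..<a}" and eq: "nat ((c + int i) mod int p) = nat ((c + int j) mod int p)"
    have "(c + int i) mod int p = (c + int j) mod int p" using eq p2 by (simp add: nat_eq_iff)
    hence "int i mod int p = int j mod int p" by (metis add_diff_cancel_left' mod_diff_left_eq)
    hence "int i = int j" using ij ap by (simp add: zmod_int)
    thus "i = j" by simp
  qed
  have cardR: "card R = a" unfolding R_def using card_image[OF injR] by simp
  have Rsub: "R \<subseteq> {..<p}" unfolding R_def using p2 by (auto simp: nat_less_iff)
  have hR: "h (real (nat ((c + int i) mod int p))) = h (real_of_int (c + int i))" for i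
  proof -
    have "real (nat ((c + int i) mod int p)) = real_of_int (c + int i) - P * real_of_int ((c + int i) div int p)"
    proof -
      have m0: "(c + int i) mod int p \<ge> 0" using p2 by simp
      have "real (nat ((c + int i) mod int p)) = real_of_int ((c + int i) mod int p)" using m0 by simp
      also have "real_of_int ((c + int i) mod int p) = real_of_int ((c + int i) - int p * ((c + int i) div int p))"
        by (rule arg_cong[where f=real_of_int]) (simp add: minus_mult_div_eq_mod)
      also have "\<dots> = real_of_int (c + int i) - P * real_of_int ((c + int i) div int p)"
        unfolding P_def by simp
      finally show ?thesis .
    qed
    thus ?thesis using hper[of "c + int i" "(c + int i) div int p"] by (simp only:)
  qed
  have hin: "l \<le> h x" if xR: "x \<in> R" for x
  proof -
    obtain i where i: "i < a" "x = nat ((c + int i) mod int p)" using xR unfolding R_def by auto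
    have "\<bar>real_of_int (c + int i) - t\<bar> \<le> real a / 2"
    proof -
      have "real_of_int c + real i \<le> real_of_int c + real a - 1" using i by simp
      thus ?thesis using c1 unfolding abs_le_iff by (intro conjI; linarith)
    qed
    hence "2*pi*\<bar>real_of_int (c + int i) - t\<bar>/P \<le> pi * real a / P"
      using P by (simp add: divide_right_mono)
    moreover have "pi * real a / P \<le> pi" using ap P by (simp add: P_def field_simps)
    ultimately have "cos (pi * real a / P) \<le> cos (2*pi*\<bar>real_of_int (c + int i) - t\<bar>/P)"
      using P by (intro cos_monotone_0_pi_le) auto
    thus ?thesis using i hR habs l_def by simp
  qed
  have hout: "h (real r) \<le> l" if "r < p" "r \<notin> R" for r
  proof -
    define k where "k = \<lfloor>(real r - t)/P + 1/2\<rfloor>"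
    define j where "j = int r - int p * k"
    have k1: "real_of_int k \<le> (real r - t)/P + 1/2" "(real r - t)/P + 1/2 < real_of_int k + 1"
      unfolding k_def by linarith+
    have jt: "real_of_int j - t = (real r - t) - P * real_of_int k" unfolding j_def P_def by simp
    have "P * real_of_int k \<le> (real r - t) + P/2" "(real r - t) + P/2 < P * real_of_int k + P"
      using k1 P by (simp_all add: field_simps)
    hence jP: "\<bar>real_of_int j - t\<bar> \<le> P/2" using jt unfolding abs_le_iff by (intro conjI; linarith)
    have jmod: "j mod int p = int r"
    proof -
      have "j = int r + (-k) * int p" unfolding j_def by simp
      hence "j mod int p = int r mod int p" by (simp only: mod_mult_self1)
      thus ?thesis using that by simp
    qed
    have "\<not> (c \<le> j \<and> j < c + int a)"
    proof
      assume "c \<le> j \<and> j < c + int a"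
      hence "nat (j - c) < a" "c + int (nat (j - c)) = j" by auto
      hence i1: "nat (j - c) < a" and i2: "r = nat ((c + int (nat (j - c))) mod int p)" using jmod by auto
      have "r \<in> R" unfolding R_def using i1 i2 by blast
      thus False using that by simp
    qed
    hence "j \<le> c - 1 \<or> j \<ge> c + int a" by auto
    hence "real a / 2 \<le> \<bar>real_of_int j - t\<bar>"
    proof
      assume "j \<le> c - 1" hence "real_of_int j \<le> real_of_int c - 1" by linarith
      thus ?thesis using c1 by linarith
    next
      assume "j \<ge> c + int a" hence "real_of_int j \<ge> real_of_int c + real a" by linarith
      thus ?thesis using c1 by linarith
    qed
    hence "pi * real a / P \<le> 2*pi*\<bar>real_of_int j - t\<bar>/P"
      using P by (simp add: divide_right_mono)
    moreover have "2*pi*\<bar>real_of_int j - t\<bar>/P \<le> pi" using jP P by (simp add: field_simps)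
    ultimately have "cos (2*pi*\<bar>real_of_int j - t\<bar>/P) \<le> cos (pi * real a / P)"
      using P by (intro cos_monotone_0_pi_le) auto
    moreover have "h (real r) = h (real_of_int j)"
      using hper[of "int r" k] unfolding j_def P_def by simp
    ultimately show ?thesis using habs l_def by simp
  qed
  have "(\<Sum>r\<in>B. h (real r)) \<le> (\<Sum>r\<in>R. h (real r))"
    by (rule exchange_sum[where l=l]) (use finB Rsub finite_subset cardR a_def hin hout Bp in auto)
  also have "(\<Sum>r\<in>R. h (real r)) = (\<Sum>i<a. h (real_of_int (c + int i)))"
    unfolding R_def by (simp add: sum.reindex[OF injR] hR)
  also have "\<dots> = (\<Sum>i<a. cos (2*pi*(real_of_int c - t)/P + real i * (2*pi/P)))"
    unfolding h_def proof (rule sum.cong[OF refl], rule arg_cong[where f=cos])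
    fix i show "2 * pi * (real_of_int (c + int i) - t) / P = 2*pi*(real_of_int c - t)/P + real i * (2*pi/P)"
      using P by (simp add: field_simps)
  qed
  also have "\<dots> \<le> sin (real a * (2*pi/P) / 2) / sin ((2*pi/P)/2)"
  proof (rule cos_sum_bound)
    show "sin (2*pi/P/2) > 0" using P by (intro sin_gt_zero) (simp_all add: field_simps)
    show "sin (real a * (2*pi/P) / 2) \<ge> 0" using P ap by (intro sin_ge_zero) (simp_all add: P_def field_simps)
  qed
  also have "\<dots> = sin (pi*real (card B)/real p) / sin (pi/real p)"
    by (simp add: a_def P_def field_simps)
  finally show ?thesis using hB by simp
qed

lemma max_cos_bound:
  fixes p m :: nat and L :: "'l set" and th :: "'l \<Rightarrow> real"
  assumes p2: "p \<ge> 2" and fin: "finite L" and ne: "L \<noteq> {}" and Lm: "card L \<le> m"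
  shows "(\<Sum>r<p. Max ((\<lambda>l. cos (2*pi*real r/real p - th l)) ` L))
           \<le> real m * sin (pi / real m) / sin (pi / real p)"
proof -
  define G where "G r = Max ((\<lambda>l. cos (2*pi*real r/real p - th l)) ` L)" for r
  have "\<forall>r. \<exists>l. l \<in> L \<and> G r = cos (2*pi*real r/real p - th l)"
  proof
    fix r
    have "G r \<in> (\<lambda>l. cos (2*pi*real r/real p - th l)) ` L" unfolding G_def
      by (rule Max_in) (use fin ne in auto)
    thus "\<exists>l. l \<in> L \<and> G r = cos (2*pi*real r/real p - th l)" by auto
  qed
  then obtain sel where sel: "\<And>r. sel r \<in> L" "\<And>r. G r = cos (2*pi*real r/real p - th (sel r))"
    by metis
  define Bl where "Bl l = {r \<in> {..<p}. sel r = l}" for l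
  have gr: "(\<Sum>l\<in>L. \<Sum>r\<in>Bl l. f r) = (\<Sum>r<p. f r)" for f :: "nat \<Rightarrow> real"
    unfolding Bl_def by (rule sum.group) (use fin sel in auto)
  have "(\<Sum>r<p. G r) = (\<Sum>l\<in>L. \<Sum>r\<in>Bl l. cos (2*pi*real r/real p - th (sel r)))"
    using gr sel by simp
  also have "\<dots> = (\<Sum>l\<in>L. \<Sum>r\<in>Bl l. cos (2*pi*real r/real p - th l))"
    by (intro sum.cong refl) (simp add: Bl_def)
  also have "\<dots> \<le> (\<Sum>l\<in>L. sin (pi*real (card (Bl l))/real p) / sin (pi/real p))"
    by (intro sum_mono arc_bound p2) (auto simp: Bl_def)
  also have "\<dots> = (\<Sum>l\<in>L. sin (pi * (real (card (Bl l))/real p))) / sin (pi/real p)"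
    by (simp add: sum_divide_distrib)
  also have "(\<Sum>l\<in>L. sin (pi * (real (card (Bl l))/real p))) \<le> real (card L) * sin (pi / real (card L))"
  proof (rule sin_jensen[OF fin ne])
    have "(\<Sum>l\<in>L. real (card (Bl l))) = (\<Sum>l\<in>L. \<Sum>r\<in>Bl l. (1::real))" by simp
    also have "\<dots> = real p" using gr[of "\<lambda>_. 1"] by simp
    finally show "(\<Sum>l\<in>L. real (card (Bl l)) / real p) = 1" using p2 by (simp add: sum_divide_distrib[symmetric])
  qed auto
  also have "real (card L) * sin (pi / real (card L)) \<le> real m * sin (pi / real m)"
    by (rule xsin_mono) (use fin ne Lm in \<open>auto simp: Suc_le_eq card_gt_0_iff\<close>)
  finally show ?thesis
    using p2 sin_gt_zero[of "pi / real p"] unfolding G_def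
    by (simp add: divide_right_mono)
qed


lemma prime_CHAR_fin: "prime CHAR('a::{field,finite})"
  by (rule prime_CHAR_semidom) (rule finite_imp_CHAR_pos, simp)

lemma CHAR_eq_p:
  assumes "prime p" "card (UNIV :: 'a::{field,finite} set) = p ^ w" "w \<ge> 1"
  shows "CHAR('a) = p"
proof -
  have "CHAR('a) dvd p ^ w" using CHAR_dvd_CARD[where 'a='a] assms by simp
  hence "CHAR('a) dvd p" using prime_dvd_power prime_CHAR_fin[where 'a='a] by blast
  thus ?thesis using assms(1) prime_CHAR_fin[where 'a='a] by (metis prime_nat_iff prime_gt_1_nat less_irrefl)
qed

lemma pow_card_same:
  fixes x :: "'a :: {field,finite}"
  shows   "x ^ card (UNIV :: 'a set) = x"
proof (cases "x = 0")
  case False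
  have "x * (\<Prod>y\<in>UNIV-{0}. x * y) = x * x ^ (card (UNIV :: 'a set) - 1) * \<Prod>(UNIV-{0})"
    by (simp add: prod.distrib mult_ac)
  also have "x * x ^ (card (UNIV :: 'a set) - 1) = x ^ Suc (card (UNIV :: 'a set) - 1)"
    by (subst power_Suc) auto
  also have "Suc (card (UNIV :: 'a set) - 1) = card (UNIV :: 'a set)"
    using finite_UNIV_card_ge_0[where ?'a = 'a] by simp
  also have "(\<Prod>y\<in>UNIV-{0}. x * y) = (\<Prod>y\<in>UNIV-{0}. y)"
    by (rule prod.reindex_bij_witness[of _ "\<lambda>y. y / x" "\<lambda>y. x * y"]) (use False in auto)
  finally show ?thesis
    by simp
qed (use finite_UNIV_card_ge_0[where ?'a = 'a] in auto)

definition ftrace :: "nat \<Rightarrow> 'a::field \<Rightarrow> 'a" where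
  "ftrace w x = (\<Sum>i<w. x ^ (CHAR('a) ^ i))"

lemma trace_add: "ftrace w (x + y) = ftrace w x + ftrace w (y::'a::{field,finite})"
  unfolding ftrace_def
  by (simp add: freshmans_dream'[OF prime_CHAR_fin refl] sum.distrib)

lemma trace_zero: "ftrace w (0::'a::{field,finite}) = 0"
proof -
  have "CHAR('a) \<noteq> 0" using prime_CHAR_fin[where 'a='a] by auto
  thus ?thesis unfolding ftrace_def by (intro sum.neutral) (simp add: power_0_left)
qed

lemma trace_pow:
  assumes "card (UNIV :: 'a::{field,finite} set) = CHAR('a) ^ w" "w \<ge> 1"
  shows "ftrace w (x::'a) ^ CHAR('a) = ftrace w x"
proof -
  define f where "f i = x ^ (CHAR('a) ^ i)" for i
  have fS: "f i ^ CHAR('a) = f (Suc i)" for i unfolding f_def by (metis power_Suc2 power_mult)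
  have "ftrace w x ^ CHAR('a) = (\<Sum>i<w. f i ^ CHAR('a))"
    unfolding ftrace_def f_def by (rule freshmans_dream_sum[OF prime_CHAR_fin refl])
  also have "\<dots> = (\<Sum>i<w. f (Suc i))" using fS by simp
  finally have 1: "ftrace w x ^ CHAR('a) = (\<Sum>i<w. f (Suc i))" .
  have A: "(\<Sum>i<Suc w. f i) = f 0 + (\<Sum>i<w. f (Suc i))" by (rule sum.lessThan_Suc_shift)
  have B: "(\<Sum>i<Suc w. f i) = ftrace w x + f w" unfolding ftrace_def f_def by simp
  have "f w = x" "f 0 = x" unfolding f_def using assms pow_card_same[of x] by simp_all
  thus ?thesis using 1 A B by simp
qed

lemma of_nat_pow_CHAR: "(of_nat i :: 'a::{field,finite}) ^ CHAR('a) = of_nat i"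
proof (induction i)
  case 0 then show ?case using prime_CHAR_fin[where 'a='a] by (simp add: prime_gt_0_nat)
next
  case (Suc i)
  have "(of_nat (Suc i) :: 'a) ^ CHAR('a) = (of_nat i + 1) ^ CHAR('a)" by (simp add: add.commute)
  also have "\<dots> = of_nat i ^ CHAR('a) + 1 ^ CHAR('a)" by (rule freshmans_dream[OF prime_CHAR_fin refl])
  finally show ?case using Suc by (simp add: add.commute)
qed

lemma prime_field:
  assumes "(z :: 'a::{field,finite}) ^ CHAR('a) = z"
  shows "\<exists>i<CHAR('a). z = of_nat i"
proof -
  define p where "p = CHAR('a)"
  have p2: "p \<ge> 2" unfolding p_def using prime_CHAR_fin[where 'a='a] prime_ge_2_nat by blast
  define P where "P = Polynomial.monom (1::'a) p - [:0, 1:]"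
  have polyP: "poly P y = y ^ p - y" for y unfolding P_def by (simp add: poly_monom)
  have "Polynomial.coeff [:0, 1::'a:] p = 0" using p2 by (auto simp: coeff_pCons split: nat.split)
  hence "Polynomial.coeff P p = 1" unfolding P_def by simp
  hence P0: "P \<noteq> 0" by auto
  have "degree P \<le> p" unfolding P_def
    by (rule degree_diff_le) (use p2 degree_monom_le in auto)
  hence cardR: "card {y. poly P y = 0} \<le> p" using card_poly_roots_bound[OF P0] by simp
  have inj: "inj_on (of_nat :: nat \<Rightarrow> 'a) {..<p}"
  proof
    fix i j assume "i \<in> {..<p}" "j \<in> {..<p}" "(of_nat i :: 'a) = of_nat j"
    hence "[i = j] (mod p)" "i < p" "j < p" unfolding p_def using of_nat_eq_iff_cong_CHAR by auto
    thus "i = j" by (simp add: cong_def)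
  qed
  have sub: "(of_nat :: nat \<Rightarrow> 'a) ` {..<p} \<subseteq> {y. poly P y = 0}"
    using of_nat_pow_CHAR unfolding polyP p_def by auto
  have "(of_nat :: nat \<Rightarrow> 'a) ` {..<p} = {y. poly P y = 0}"
  proof (rule card_subset_eq[OF _ sub])
    have fin: "finite {y. poly P y = 0}" by (rule poly_roots_finite[OF P0])
    show "finite {y. poly P y = 0}" by (rule fin)
    have "card ((of_nat :: nat \<Rightarrow> 'a) ` {..<p}) \<le> card {y. poly P y = 0}" by (rule card_mono[OF fin sub])
    thus "card ((of_nat :: nat \<Rightarrow> 'a) ` {..<p}) = card {y. poly P y = 0}"
      using cardR card_image[OF inj] by simp
  qed
  moreover have "z \<in> {y. poly P y = 0}" using assms by (simp add: polyP p_def)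
  ultimately show ?thesis unfolding p_def by auto
qed

lemma trace_nonzero:
  assumes "card (UNIV :: 'a::{field,finite} set) = CHAR('a) ^ w" "w \<ge> 1"
  shows "\<exists>x::'a. ftrace w x \<noteq> 0"
proof -
  define p where "p = CHAR('a)"
  have p2: "p \<ge> 2" unfolding p_def using prime_CHAR_fin[where 'a='a] prime_ge_2_nat by blast
  define T where "T = (\<Sum>i<w. Polynomial.monom (1::'a) (p ^ i))"
  have polyT: "poly T x = ftrace w x" for x unfolding T_def ftrace_def p_def by (simp add: poly_sum poly_monom)
  have "Polynomial.coeff T (p ^ (w - 1)) = (\<Sum>i<w. if p ^ i = p ^ (w - 1) then 1 else 0)"
    unfolding T_def by (simp add: coeff_sum)
  also have "\<dots> = (\<Sum>i<w. if i = w - 1 then 1 else 0)"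
    using p2 by (simp add: power_inject_exp)
  also have "\<dots> = 1" using assms by simp
  finally have "Polynomial.coeff T (p ^ (w - 1)) = 1" by simp
  hence T0: "T \<noteq> 0" by auto
  have "degree T \<le> p ^ (w - 1)" unfolding T_def
    by (rule degree_sum_le) (use p2 in \<open>auto intro: order.trans[OF degree_monom_le] power_increasing\<close>)
  hence "card {y. poly T y = 0} \<le> p ^ (w - 1)" using card_poly_roots_bound[OF T0] by simp
  moreover have "p ^ (w - 1) < card (UNIV :: 'a set)"
  proof -
    have "p ^ (w - 1) < p ^ w" using p2 assms(2) by (intro power_strict_increasing) auto
    thus ?thesis using assms(1) unfolding p_def by simp
  qed
  ultimately have "{y. poly T y = 0} \<noteq> UNIV" by (metis le_less_trans less_irrefl)
  thus ?thesis using polyT by auto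
qed

definition Lf :: "nat \<Rightarrow> 'a::field \<Rightarrow> nat" where
  "Lf w x = (THE i. i < CHAR('a) \<and> of_nat i = ftrace w x)"

lemma Lf_props:
  assumes "card (UNIV :: 'a::{field,finite} set) = CHAR('a) ^ w" "w \<ge> 1"
  shows "Lf w (x::'a) < CHAR('a) \<and> of_nat (Lf w x) = ftrace w x"
proof -
  obtain i where i: "i < CHAR('a)" "ftrace w x = of_nat i" using prime_field[OF trace_pow[OF assms]] by blast
  have "\<exists>!i. i < CHAR('a) \<and> of_nat i = ftrace w x"
  proof (rule ex1I[of _ i])
    show "i < CHAR('a) \<and> of_nat i = ftrace w x" using i by simp
    fix j assume "j < CHAR('a) \<and> (of_nat j::'a) = ftrace w x"
    hence "[j = i] (mod CHAR('a))" "j < CHAR('a)" using i of_nat_eq_iff_cong_CHAR[where 'a='a] by auto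
    thus "j = i" using i by (simp add: cong_def)
  qed
  thus ?thesis unfolding Lf_def by (rule theI')
qed

lemma Lf_eqI:
  assumes "card (UNIV :: 'a::{field,finite} set) = CHAR('a) ^ w" "w \<ge> 1" "i < CHAR('a)" "of_nat i = ftrace w (x::'a)"
  shows "Lf w x = i"
proof -
  have "(of_nat (Lf w x) :: 'a) = of_nat i" using Lf_props[OF assms(1,2), of x] assms(4) by simp
  hence "[Lf w x = i] (mod CHAR('a))" by (simp only: of_nat_eq_iff_cong_CHAR)
  thus ?thesis using Lf_props[OF assms(1,2), of x] assms(3) by (simp add: cong_def)
qed

lemma Lf_add:
  assumes "card (UNIV :: 'a::{field,finite} set) = CHAR('a) ^ w" "w \<ge> 1"
  shows "Lf w (x + y::'a) = (Lf w x + Lf w y) mod CHAR('a)"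
proof (rule Lf_eqI[OF assms])
  show "(Lf w x + Lf w y) mod CHAR('a) < CHAR('a)" using prime_CHAR_fin[where 'a='a] by (simp add: prime_gt_0_nat)
  have "(of_nat ((Lf w x + Lf w y) mod CHAR('a)) :: 'a) = of_nat (Lf w x + Lf w y)"
    unfolding of_nat_eq_iff_cong_CHAR cong_def by simp
  also have "\<dots> = ftrace w (x + y)" using Lf_props[OF assms] by (simp add: trace_add)
  finally show "of_nat ((Lf w x + Lf w y) mod CHAR('a)) = ftrace w (x + y)" .
qed

lemma Lf_nonzero:
  assumes "card (UNIV :: 'a::{field,finite} set) = CHAR('a) ^ w" "w \<ge> 1"
  shows "\<exists>x::'a. Lf w x \<noteq> 0"
proof -
  obtain x :: 'a where "ftrace w x \<noteq> 0" using trace_nonzero[OF assms] by blast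
  hence "Lf w x \<noteq> 0" using Lf_props[OF assms, of x] by (metis of_nat_0)
  thus ?thesis by blast
qed


definition psi :: "nat \<Rightarrow> 'a::field \<Rightarrow> complex" where
  "psi w x = cis (2*pi*real (Lf w x)/real CHAR('a))"

lemma CHAR_ge2: "CHAR('a::{field,finite}) \<ge> 2"
  using prime_CHAR_fin[where 'a='a] prime_ge_2_nat by blast

lemma psi_add:
  assumes "card (UNIV :: 'a::{field,finite} set) = CHAR('a) ^ w" "w \<ge> 1"
  shows "psi w (x + y :: 'a) = psi w x * psi w y"
proof -
  define p where "p = CHAR('a)"
  have p: "real p > 0" using CHAR_ge2[where 'a='a] by (simp add: p_def)
  define a where "a = Lf w x" define b where "b = Lf w y"
  have e: "real (a + b) = real ((a + b) mod p) + real p * real ((a + b) div p)"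
    by (metis mod_mult_div_eq of_nat_add of_nat_mult mult.commute)
  have "psi w x * psi w y = cis (2*pi*real (a+b)/real p)"
    unfolding psi_def cis_mult a_def b_def p_def by (simp add: add_divide_distrib algebra_simps)
  also have "2*pi*real (a+b)/real p = 2*pi*real ((a + b) mod p)/real p + 2*pi*real ((a + b) div p)"
    unfolding e using p by (simp add: field_simps)
  also have "cis \<dots> = cis (2*pi*real ((a + b) mod p)/real p)"
    by (simp add: cis_mult[symmetric])
  also have "\<dots> = psi w (x + y)"
    unfolding psi_def Lf_add[OF assms] a_def b_def p_def ..
  finally show ?thesis ..
qed

lemma Lf_zero:
  assumes "card (UNIV :: 'a::{field,finite} set) = CHAR('a) ^ w" "w \<ge> 1"
  shows "Lf w (0::'a) = 0"
  by (rule Lf_eqI[OF assms]) (use CHAR_ge2[where 'a='a] trace_zero in auto)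

lemma psi_zero:
  assumes "card (UNIV :: 'a::{field,finite} set) = CHAR('a) ^ w" "w \<ge> 1"
  shows "psi w (0::'a) = 1"
  unfolding psi_def Lf_zero[OF assms] by simp

lemma norm_psi [simp]: "norm (psi w x) = 1"
  unfolding psi_def by simp

lemma psi_nontriv:
  assumes "card (UNIV :: 'a::{field,finite} set) = CHAR('a) ^ w" "w \<ge> 1"
  shows "\<exists>x::'a. psi w x \<noteq> 1"
proof -
  obtain x :: 'a where x: "Lf w x \<noteq> 0" using Lf_nonzero[OF assms] by blast
  define p where "p = CHAR('a)"
  have p: "p \<ge> 2" using CHAR_ge2[where 'a='a] by (simp add: p_def)
  have lt: "Lf w x < p" using Lf_props[OF assms, of x] by (simp add: p_def)
  have "psi w x \<noteq> 1"
  proof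
    assume "psi w x = 1"
    hence "Re (psi w x) = 1" by simp
    hence "cos (2*pi*real (Lf w x)/real p) = 1" unfolding psi_def p_def by simp
    then obtain n :: int where n: "2*pi*real (Lf w x)/real p = of_int n * 2 * pi"
      using cos_one_2pi_int by blast
    hence "real (Lf w x) = of_int n * real p" using p by (simp add: field_simps)
    hence "real (Lf w x) / real p = of_int n" using p by simp
    moreover have "0 < real (Lf w x) / real p" "real (Lf w x) / real p < 1" using x lt p by auto
    ultimately have "(0::real) < of_int n" "of_int n < (1::real)" by simp_all
    hence "0 < n" "n < 1" by simp_all
    thus False by simp
  qed
  thus ?thesis by blast
qed

lemma psi_sum_zero:
  assumes "card (UNIV :: 'a::{field,finite} set) = CHAR('a) ^ w" "w \<ge> 1" "(b::'a) \<noteq> 0"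
  shows "(\<Sum>x\<in>UNIV. psi w (b * x)) = 0"
proof -
  obtain x0 :: 'a where x0: "psi w x0 \<noteq> 1" using psi_nontriv[OF assms(1,2)] by blast
  have s0: "(\<Sum>x\<in>UNIV. psi w (x + x0)) = (\<Sum>x\<in>UNIV. psi w (x::'a))"
    by (rule sum.reindex_bij_witness[of _ "\<lambda>x. x - x0" "\<lambda>x. x + x0"]) auto
  have s: "(\<Sum>x\<in>UNIV. psi w (x::'a)) = (\<Sum>x\<in>UNIV. psi w (x + x0))" using s0 by simp
  also have "\<dots> = psi w x0 * (\<Sum>x\<in>UNIV. psi w (x::'a))"
    by (simp add: psi_add[OF assms(1,2)] sum_distrib_left mult.commute)
  finally have "(1 - psi w x0) * (\<Sum>x\<in>UNIV. psi w (x::'a)) = 0" by (simp add: algebra_simps)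
  hence z: "(\<Sum>x\<in>UNIV. psi w (x::'a)) = 0" using x0 by simp
  have "(\<Sum>x\<in>UNIV. psi w (b * x)) = (\<Sum>x\<in>UNIV. psi w (x::'a))"
    by (rule sum.reindex_bij_witness[of _ "\<lambda>x. x / b" "\<lambda>x. b * x"]) (use assms(3) in auto)
  thus ?thesis using z by simp
qed

lemma fiber_card:
  assumes H: "card (UNIV :: 'a::{field,finite} set) = CHAR('a) ^ w" "w \<ge> 1" and r: "r < CHAR('a)"
  shows "real (card {x::'a. Lf w x = r}) = real (card (UNIV :: 'a set)) / real CHAR('a)"
proof -
  define p where "p = CHAR('a)"
  have p: "p \<ge> 2" using CHAR_ge2[where 'a='a] by (simp add: p_def)
  define F where "F r = {x::'a. Lf w x = r}" for r
  obtain x0 :: 'a where x0: "Lf w x0 \<noteq> 0" using Lf_nonzero[OF H(1,2)] by blast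
  define s where "s = Lf w x0"
  have sp: "s < p" "s \<noteq> 0" using Lf_props[OF H(1,2), of x0] x0 by (auto simp: s_def p_def)
  have Lp: "Lf w x < p" for x :: 'a using Lf_props[OF H(1,2), of x] by (simp add: p_def)
  have shift: "card (F r) = card (F ((r + s) mod p))" if "r < p" for r
  proof -
    have inj: "inj_on (\<lambda>x. x + x0) (F r)" by (auto intro: inj_onI)
    have "(\<lambda>x. x + x0) ` F r = F ((r + s) mod p)"
    proof
      show "(\<lambda>x. x + x0) ` F r \<subseteq> F ((r + s) mod p)"
        by (auto simp: F_def Lf_add[OF H(1,2)] s_def p_def)
      show "F ((r + s) mod p) \<subseteq> (\<lambda>x. x + x0) ` F r"
      proof
        fix y assume y: "y \<in> F ((r + s) mod p)"
        define x where "x = y - x0"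
        have "(Lf w x + s) mod p = (r + s) mod p"
          using y unfolding F_def x_def s_def p_def using Lf_add[OF H(1,2), of "y - x0" x0] by simp
        hence "[Lf w x + s = r + s] (mod p)" by (simp add: cong_def)
        hence "[Lf w x = r] (mod p)" by (simp add: cong_add_rcancel_nat)
        hence "Lf w x = r" using Lp[of x] that by (simp add: cong_def)
        thus "y \<in> (\<lambda>x. x + x0) ` F r" unfolding F_def x_def by (intro image_eqI[of _ _ "y - x0"]) auto
      qed
    qed
    thus ?thesis using card_image[OF inj] by simp
  qed
  have iter: "card (F r) = card (F ((r + c * s) mod p))" if "r < p" for r c
  proof (induction c)
    case 0 then show ?case using that by simp
  next
    case (Suc c)
    have "card (F ((r + c * s) mod p)) = card (F (((r + c * s) mod p + s) mod p))"
      by (rule shift) (use p in simp)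
    also have "((r + c * s) mod p + s) mod p = (r + c * s + s) mod p" by (rule mod_add_left_eq)
    also have "r + c * s + s = r + Suc c * s" by simp
    finally show ?case using Suc by simp
  qed
  have all: "card (F r') = card (F 0)" if "r' < p" for r'
  proof -
    have pp: "prime p" unfolding p_def by (rule prime_CHAR_fin)
    have "\<not> p dvd s" using sp nat_dvd_not_less by auto
    hence "coprime p s" using prime_imp_coprime[OF pp] by blast
    hence "coprime s p" by (simp add: coprime_commute)
    then obtain y where y: "[s * y = Suc 0] (mod p)" using cong_solve_coprime_nat by blast
    have "[0 + (y * r') * s = 0 + r' * 1] (mod p)"
      using cong_scalar_left[OF y, of r'] by (simp add: ac_simps)
    hence "(0 + (y * r') * s) mod p = r'" using that by (simp add: cong_def)
    thus ?thesis using iter[of 0 "y * r'"] p by simp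
  qed
  have "(\<Sum>r'<p. card (F r')) = card (UNIV :: 'a set)"
  proof -
    have "(\<Sum>r'<p. card (F r')) = (\<Sum>r'<p. \<Sum>x\<in>{x\<in>UNIV. Lf w (x::'a) = r'}. (1::nat))" by (simp add: F_def)
    also have "\<dots> = (\<Sum>x\<in>(UNIV::'a set). (1::nat))" by (rule sum.group) (use Lp in auto)
    finally show ?thesis by simp
  qed
  moreover have "(\<Sum>r'<p. card (F r')) = (\<Sum>r'<p. card (F 0))"
    by (intro sum.cong refl all) simp
  ultimately have "p * card (F 0) = card (UNIV :: 'a set)" by simp
  moreover have "card (F r) = card (F 0)" using all[of r] r by (simp add: p_def)
  ultimately have "real p * real (card (F r)) = real (card (UNIV :: 'a set))" by (simp flip: of_nat_mult)
  thus ?thesis using p unfolding F_def p_def by (simp add: field_simps)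
qed

lemma sum_fiber:
  assumes H: "card (UNIV :: 'a::{field,finite} set) = CHAR('a) ^ w" "w \<ge> 1"
  shows "(\<Sum>x\<in>UNIV. g (Lf w (x::'a))) = real (card (UNIV :: 'a set)) / real CHAR('a) * (\<Sum>r<CHAR('a). g r)"
proof -
  have Lp: "Lf w x < CHAR('a)" for x :: 'a using Lf_props[OF H, of x] by simp
  have eq: "(\<Sum>r<CHAR('a). \<Sum>x\<in>{x\<in>UNIV. Lf w (x::'a) = r}. g (Lf w x)) = (\<Sum>x\<in>UNIV. g (Lf w (x::'a)))"
    by (rule sum.group[of UNIV "{..<CHAR('a)}" "Lf w" "\<lambda>x. g (Lf w x)"]) (use Lp in auto)
  have "(\<Sum>x\<in>UNIV. g (Lf w (x::'a))) = (\<Sum>r<CHAR('a). \<Sum>x\<in>{x\<in>UNIV. Lf w (x::'a) = r}. g (Lf w x))"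
    using eq by simp
  also have "\<dots> = (\<Sum>r<CHAR('a). real (card {x::'a. Lf w x = r}) * g r)" by simp
  also have "\<dots> = (\<Sum>r<CHAR('a). real (card (UNIV :: 'a set)) / real CHAR('a) * g r)"
    by (intro sum.cong refl) (simp add: fiber_card[OF H])
  finally show ?thesis by (simp add: sum_distrib_left)
qed

lemma norm_as_Re: "cmod z = Re (cis (- Arg z) * z)"
proof (cases "z = 0")
  case False
  have "cis (- Arg z) * z = cis (- Arg z) * rcis (cmod z) (Arg z)" by (simp add: rcis_cmod_Arg)
  also have "\<dots> = complex_of_real (cmod z)" by (simp add: rcis_def cis_mult)
  finally show ?thesis by simp
qed simp

lemma coord_bound:
  fixes f :: "'a::{field,finite} \<Rightarrow> 'l"
  assumes H: "card (UNIV :: 'a set) = CHAR('a) ^ w" "w \<ge> 1" and b: "b \<noteq> 0"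
    and m: "card (range f) \<le> m"
  shows "(\<Sum>l\<in>range f. cmod (\<Sum>t\<in>{t. f t = l}. psi w (b * t)))
         \<le> real (card (UNIV :: 'a set)) / real CHAR('a) * (real m * sin (pi / real m) / sin (pi / real CHAR('a)))"
proof -
  define p where "p = CHAR('a)"
  have p: "p \<ge> 2" using CHAR_ge2[where 'a='a] by (simp add: p_def)
  define S where "S l = (\<Sum>t\<in>{t. f t = l}. psi w (b * t))" for l
  define th where "th l = Arg (S l)" for l
  define G where "G r = Max ((\<lambda>l. cos (2*pi*real r/real p - th l)) ` range f)" for r
  have Re1: "Re (cis (- th l) * psi w (y::'a)) = cos (2*pi*real (Lf w y)/real p - th l)" for l y
    unfolding psi_def cis_mult p_def by simp
  have "(\<Sum>l\<in>range f. cmod (S l)) = (\<Sum>l\<in>range f. \<Sum>t\<in>{t\<in>UNIV. f t = l}. cos (2*pi*real (Lf w (b*t))/real p - th l))"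
  proof (rule sum.cong[OF refl])
    fix l
    have "cmod (S l) = Re (cis (- th l) * S l)" unfolding th_def by (rule norm_as_Re)
    also have "\<dots> = (\<Sum>t\<in>{t\<in>UNIV. f t = l}. Re (cis (- th l) * psi w (b * t)))"
      unfolding S_def by (simp only: sum_distrib_left Re_sum) simp
    also have "\<dots> = (\<Sum>t\<in>{t\<in>UNIV. f t = l}. cos (2*pi*real (Lf w (b*t))/real p - th l))"
      by (simp only: Re1)
    finally show "cmod (S l) = \<dots>" .
  qed
  also have "\<dots> = (\<Sum>l\<in>range f. \<Sum>t\<in>{t\<in>UNIV. f t = l}. cos (2*pi*real (Lf w (b*t))/real p - th (f t)))"
    by (intro sum.cong refl) auto
  also have "\<dots> = (\<Sum>t\<in>UNIV. cos (2*pi*real (Lf w (b*t))/real p - th (f t)))"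
    by (rule sum.group) auto
  also have "\<dots> \<le> (\<Sum>t\<in>UNIV. G (Lf w (b*t)))"
    unfolding G_def by (intro sum_mono Max_ge) auto
  also have "\<dots> = (\<Sum>t\<in>UNIV. G (Lf w (t::'a)))"
    by (rule sum.reindex_bij_witness[of _ "\<lambda>x. x / b" "\<lambda>x. b * x"]) (use b in auto)
  also have "\<dots> = real (card (UNIV :: 'a set)) / real p * (\<Sum>r<p. G r)"
    unfolding p_def by (rule sum_fiber[OF H])
  also have "\<dots> \<le> real (card (UNIV :: 'a set)) / real p * (real m * sin (pi / real m) / sin (pi / real p))"
    unfolding G_def by (intro mult_left_mono max_cos_bound p m) auto
  finally show ?thesis unfolding S_def p_def .
qed


definition dotp :: "'a::field^'n \<Rightarrow> 'a^'n \<Rightarrow> 'a" where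
  "dotp x y = (\<Sum>i\<in>UNIV. x$i * y$i)"

lemma dual_code_dotp: "dual_code C = {y. \<forall>x\<in>C. dotp x y = 0}"
  unfolding dual_code_def dotp_def ..

lemma dotp_add: "dotp (x + y) a = dotp x a + dotp y a"
  unfolding dotp_def by (simp add: distrib_right sum.distrib)

lemma dotp_diff: "dotp (x - y) a = dotp x a - dotp y a"
  unfolding dotp_def by (simp add: left_diff_distrib sum_subtractf)

lemma dotp_scale: "dotp (c *s x) a = c * dotp x a"
  unfolding dotp_def by (simp add: sum_distrib_left mult.assoc)

lemma dotp_comm: "dotp x y = dotp y x"
  unfolding dotp_def by (simp add: mult.commute)

lemma dotp_zero [simp]: "dotp 0 a = 0"
  unfolding dotp_def by simp

lemma psi_sum:
  assumes H: "card (UNIV :: 'a::{field,finite} set) = CHAR('a) ^ w" "w \<ge> 1"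
  shows "psi w (sum (f :: 'i \<Rightarrow> 'a) A) = (\<Prod>i\<in>A. psi w (f i))"
proof (induction A rule: infinite_finite_induct)
  case (infinite A) then show ?case using psi_zero[OF H] by simp
next
  case empty then show ?case using psi_zero[OF H] by simp
next
  case (insert x F) then show ?case by (simp add: psi_add[OF H])
qed

lemma char_sum_subspace:
  assumes H: "card (UNIV :: 'a::{field,finite} set) = CHAR('a) ^ w" "w \<ge> 1"
    and V: "vec.subspace (V :: ('a^'n) set)"
  shows "(\<Sum>x\<in>V. psi w (dotp x a)) = (if (\<forall>x\<in>V. dotp x a = 0) then of_nat (card V) else 0)"
proof (cases "\<forall>x\<in>V. dotp x a = 0")
  case True
  then show ?thesis using psi_zero[OF H] by simp
next
  case False
  then obtain x0 where x0: "x0 \<in> V" "dotp x0 a \<noteq> 0" by auto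
  obtain x1 :: 'a where x1: "psi w x1 \<noteq> 1" using psi_nontriv[OF H] by blast
  define c where "c = x1 / dotp x0 a"
  have cx: "c *s x0 \<in> V" using V x0 by (simp add: vec.subspace_scale)
  have "(\<Sum>x\<in>V. psi w (dotp (x + c *s x0) a)) = (\<Sum>x\<in>V. psi w (dotp x a))"
    by (rule sum.reindex_bij_witness[of V "\<lambda>x. x - c *s x0" "\<lambda>x. x + c *s x0"])
       (use V cx in \<open>auto intro: vec.subspace_add vec.subspace_diff\<close>)
  moreover have "dotp (x + c *s x0) a = dotp x a + x1" for x
    using x0 by (simp add: dotp_add dotp_scale c_def)
  ultimately have "(\<Sum>x\<in>V. psi w (dotp x a)) = psi w x1 * (\<Sum>x\<in>V. psi w (dotp x a))"
    by (simp add: psi_add[OF H] sum_distrib_left mult.commute)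
  hence "(1 - psi w x1) * (\<Sum>x\<in>V. psi w (dotp x a)) = 0" by (simp add: algebra_simps)
  hence "(\<Sum>x\<in>V. psi w (dotp x a)) = 0" using x1 by simp
  thus ?thesis unfolding if_not_P[OF False] .
qed

lemma orth_sum:
  assumes H: "card (UNIV :: 'a::{field,finite} set) = CHAR('a) ^ w" "w \<ge> 1"
  shows "(\<Sum>a\<in>UNIV. psi w (dotp (v::'a^'n) a)) = (if v = 0 then of_nat (card (UNIV :: ('a^'n) set)) else 0)"
proof -
  have "(\<Sum>a\<in>UNIV. psi w (dotp v a)) = (\<Sum>a\<in>UNIV. psi w (dotp a v))" by (simp add: dotp_comm)
  also have "\<dots> = (if (\<forall>x\<in>UNIV. dotp x v = 0) then of_nat (card (UNIV :: ('a^'n) set)) else 0)"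
    by (rule char_sum_subspace[OF H]) simp
  also have "(\<forall>x\<in>UNIV. dotp x v = 0) \<longleftrightarrow> v = 0"
  proof
    assume all: "\<forall>x\<in>UNIV. dotp x v = 0"
    show "v = 0" unfolding vec_eq_iff
    proof
      fix i
      have "dotp (\<chi> j. if j = i then 1 else 0) v = (\<Sum>j\<in>UNIV. if j = i then v $ j else 0)"
        unfolding dotp_def by (intro sum.cong) auto
      hence "dotp (\<chi> j. if j = i then 1 else 0) v = v $ i" by simp
      thus "v $ i = 0 $ i" using all by simp
    qed
  next
    assume "v = 0" thus "\<forall>x\<in>UNIV. dotp x v = 0" unfolding dotp_def by simp
  qed
  finally show ?thesis .
qed

lemma poisson:
  assumes H: "card (UNIV :: 'a::{field,finite} set) = CHAR('a) ^ w" "w \<ge> 1"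
    and V: "vec.subspace (C :: ('a^'n) set)"
  shows "(\<Sum>x\<in>C. f x) = of_nat (card C) / of_nat (card (UNIV :: ('a^'n) set))
          * (\<Sum>a\<in>dual_code C. \<Sum>y\<in>UNIV. f y * psi w (- dotp y a))"
proof -
  let ?N = "card (UNIV :: ('a^'n) set)"
  have N0: "?N > 0" by simp
  have one: "f x * of_nat ?N = (\<Sum>y\<in>UNIV. f y * (\<Sum>a\<in>UNIV. psi w (dotp (x - y) a)))" for x
  proof -
    have "(\<Sum>y\<in>UNIV. f y * (\<Sum>a\<in>UNIV. psi w (dotp (x - y) a)))
        = (\<Sum>y\<in>UNIV. f y * (if x - y = 0 then of_nat ?N else 0))"
      by (simp add: orth_sum[OF H])
    also have "\<dots> = (\<Sum>y\<in>UNIV. if y = x then f x * of_nat ?N else 0)"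
      by (intro sum.cong refl) auto
    also have "\<dots> = f x * of_nat ?N" by simp
    finally show ?thesis by simp
  qed
  have split: "psi w (dotp (x - y) a) = psi w (dotp x a) * psi w (- dotp y a)" for x y a :: "'a^'n"
    by (subst dotp_diff, subst diff_conv_add_uminus, rule psi_add[OF H])
  have "of_nat ?N * (\<Sum>x\<in>C. f x) = (\<Sum>x\<in>C. f x * of_nat ?N)"
    by (simp only: sum_distrib_right mult.commute)
  also have "\<dots> = (\<Sum>x\<in>C. \<Sum>y\<in>UNIV. f y * (\<Sum>a\<in>UNIV. psi w (dotp (x - y) a)))"
    by (rule sum.cong[OF refl], rule one)
  also have "\<dots> = (\<Sum>x\<in>C. \<Sum>y\<in>UNIV. \<Sum>a\<in>UNIV. f y * psi w (- dotp y a) * psi w (dotp x a))"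
    by (simp add: split sum_distrib_left mult_ac)
  also have "\<dots> = (\<Sum>y\<in>UNIV. \<Sum>x\<in>C. \<Sum>a\<in>UNIV. f y * psi w (- dotp y a) * psi w (dotp x a))"
    by (rule sum.swap)
  also have "\<dots> = (\<Sum>y\<in>UNIV. \<Sum>a\<in>UNIV. \<Sum>x\<in>C. f y * psi w (- dotp y a) * psi w (dotp x a))"
    by (rule sum.cong[OF refl], rule sum.swap)
  also have "\<dots> = (\<Sum>a\<in>UNIV. \<Sum>y\<in>UNIV. \<Sum>x\<in>C. f y * psi w (- dotp y a) * psi w (dotp x a))"
    by (rule sum.swap)
  also have "\<dots> = (\<Sum>a\<in>UNIV. (\<Sum>y\<in>UNIV. f y * psi w (- dotp y a)) * (\<Sum>x\<in>C. psi w (dotp x a)))"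
    by (intro sum.cong refl) (simp add: sum_product)
  also have "\<dots> = (\<Sum>a\<in>UNIV. if a \<in> dual_code C then of_nat (card C) * (\<Sum>y\<in>UNIV. f y * psi w (- dotp y a)) else 0)"
    by (intro sum.cong refl) (simp add: char_sum_subspace[OF H V] dual_code_dotp)
  also have "\<dots> = of_nat (card C) * (\<Sum>a\<in>dual_code C. \<Sum>y\<in>UNIV. f y * psi w (- dotp y a))"
    by (simp add: sum.If_cases sum_distrib_left)
  finally show ?thesis using N0 by (simp add: field_simps)
qed

lemma card_dual:
  assumes H: "card (UNIV :: 'a::{field,finite} set) = CHAR('a) ^ w" "w \<ge> 1"
    and V: "vec.subspace (C :: ('a^'n) set)"
  shows "card C * card (dual_code C) = card (UNIV :: ('a^'n) set)"
proof -
  let ?f = "\<lambda>x::'a^'n. if x = 0 then (1::complex) else 0"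
  have "(\<Sum>x\<in>C. ?f x) = 1" using vec.subspace_0[OF V] by simp
  moreover have "(\<Sum>y\<in>UNIV. ?f y * psi w (- dotp y a)) = 1" for a
  proof -
    have "(\<Sum>y\<in>UNIV. ?f y * psi w (- dotp y a)) = (\<Sum>y\<in>UNIV. if y = 0 then psi w (- dotp y a) else 0)"
      by (intro sum.cong) auto
    thus ?thesis using psi_zero[OF H] by simp
  qed
  ultimately have "(1::complex) = of_nat (card C) / of_nat (card (UNIV :: ('a^'n) set)) * of_nat (card (dual_code C))"
    using poisson[OF H V, of ?f] by simp
  hence "of_nat (card (UNIV :: ('a^'n) set)) = (of_nat (card C * card (dual_code C)) :: complex)"
    by (simp add: field_simps)
  thus ?thesis by (simp only: of_nat_eq_iff)
qed

lemma card_subspace_ge: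
  assumes V: "vec.subspace (C :: ('a::{field,finite}^'n) set)"
  shows "card (UNIV :: 'a set) ^ vec.dim C \<le> card C"
proof -
  obtain B where B: "B \<subseteq> C" "vec.independent B" "card B = vec.dim C"
    by (rule vec.basis_exists[of C])
  have finB: "finite B" using B(2) vec.independent_explicit by blast
  define g where "g u = (\<Sum>v\<in>B. u v *s v)" for u
  have inj: "inj_on g (PiE B (\<lambda>_. UNIV))"
  proof
    fix u u' assume u: "u \<in> PiE B (\<lambda>_. UNIV)" "u' \<in> PiE B (\<lambda>_. UNIV)" and e: "g u = g u'"
    have "(\<Sum>v\<in>B. (u v - u' v) *s v) = 0"
      using e unfolding g_def by (simp add: vec.scale_left_diff_distrib sum_subtractf)
    moreover have "\<forall>c. (\<Sum>v\<in>B. c v *s v) = 0 \<longrightarrow> (\<forall>v\<in>B. c v = 0)"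
      using B(2) vec.independent_explicit by blast
    ultimately have "\<forall>v\<in>B. u v - u' v = 0" by (rule mp[OF spec[of _ "\<lambda>v. u v - u' v"], rotated])
    thus "u = u'" using u by (auto intro!: extensionalityI[of _ B] simp: PiE_def)
  qed
  have sub: "g ` PiE B (\<lambda>_. UNIV) \<subseteq> C"
    unfolding g_def using B(1) V by (auto intro!: vec.subspace_sum vec.subspace_scale)
  have "card (UNIV :: 'a set) ^ vec.dim C = card (PiE B (\<lambda>_. UNIV :: 'a set))"
    using finB B(3) by (simp add: card_PiE)
  also have "\<dots> = card (g ` PiE B (\<lambda>_. UNIV))" using card_image[OF inj] by simp
  also have "\<dots> \<le> card C" by (rule card_mono[OF _ sub]) simp
  finally show ?thesis .
qed


lemma pmf_tau:
  assumes "finite S" "S \<noteq> {}"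
  shows "pmf (tau_dist \<tau> S) z = real (card {x\<in>S. (\<lambda>j. \<tau> j (x $ j)) = z}) / real (card S)"
proof -
  have "S \<inter> (\<lambda>x j. \<tau> j (x $ j)) -` {z} = {x\<in>S. (\<lambda>j. \<tau> j (x $ j)) = z}" by auto
  thus ?thesis unfolding tau_dist_def pmf_map using assms by (simp add: measure_pmf_of_set)
qed

lemma set_tau:
  assumes "finite S" "S \<noteq> {}"
  shows "set_pmf (tau_dist \<tau> S) = (\<lambda>x j. \<tau> j (x $ j)) ` S"
  unfolding tau_dist_def using assms by simp

lemma vec_sum_prod:
  fixes g :: "'n::finite \<Rightarrow> 'a::finite \<Rightarrow> 'c::comm_semiring_1"
  shows "(\<Sum>y\<in>(UNIV :: ('a^'n) set). \<Prod>j\<in>UNIV. g j (y $ j)) = (\<Prod>j\<in>UNIV. \<Sum>t\<in>UNIV. g j t)"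
proof -
  have "(\<Prod>j\<in>UNIV. \<Sum>t\<in>UNIV. g j t) = (\<Sum>h\<in>PiE UNIV (\<lambda>_. UNIV). \<Prod>j\<in>UNIV. g j (h j))"
    by (rule prod_sum_PiE) auto
  also have "\<dots> = (\<Sum>h\<in>UNIV. \<Prod>j\<in>UNIV. g j (h j))" by simp
  also have "\<dots> = (\<Sum>y\<in>(UNIV :: ('a^'n) set). \<Prod>j\<in>UNIV. g j (y $ j))"
    by (rule sum.reindex_bij_witness[of UNIV vec_nth vec_lambda]) (auto simp: fun_eq_iff)
  finally show ?thesis ..
qed

lemma prod_indicator:
  fixes P :: "'n::finite \<Rightarrow> bool"
  shows "(if (\<forall>j. P j) then 1 else 0 :: complex) = (\<Prod>j\<in>UNIV. if P j then 1 else 0)"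
  by auto

lemma hat_factor:
  fixes \<tau> :: "'n::finite \<Rightarrow> 'a::{field,finite} \<Rightarrow> 'l"
  assumes H: "card (UNIV :: 'a set) = CHAR('a) ^ w" "w \<ge> 1"
  shows "(\<Sum>y\<in>UNIV. (if (\<lambda>j. \<tau> j (y $ j)) = z then 1 else 0) * psi w (- dotp y a))
       = (\<Prod>j\<in>UNIV. \<Sum>t\<in>{t. \<tau> j t = z j}. psi w ((- a $ j) * t))"
proof -
  have e: "(if (\<lambda>j. \<tau> j (y $ j)) = z then 1 else 0) * psi w (- dotp y a)
          = (\<Prod>j\<in>UNIV. (if \<tau> j (y $ j) = z j then 1 else 0) * psi w ((- a $ j) * y $ j))" for y :: "'a^'n"
  proof -
    have "(if (\<lambda>j. \<tau> j (y $ j)) = z then 1 else 0 :: complex) = (\<Prod>j\<in>UNIV. if \<tau> j (y $ j) = z j then 1 else 0)"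
      unfolding fun_eq_iff[of _ z] by (rule prod_indicator)
    moreover have "psi w (- dotp y a) = (\<Prod>j\<in>UNIV. psi w ((- a $ j) * y $ j))"
    proof -
      have "- dotp y a = (\<Sum>j\<in>UNIV. (- a $ j) * y $ j)" unfolding dotp_def
        by (simp add: sum_negf mult.commute)
      thus ?thesis by (simp add: psi_sum[OF H])
    qed
    ultimately show ?thesis by (simp add: prod.distrib)
  qed
  have "(\<Sum>y\<in>UNIV. (if (\<lambda>j. \<tau> j (y $ j)) = z then 1 else 0) * psi w (- dotp y a))
      = (\<Sum>y\<in>(UNIV::('a^'n) set). \<Prod>j\<in>UNIV. (if \<tau> j (y $ j) = z j then 1 else 0) * psi w ((- a $ j) * y $ j))"
    using e by simp
  also have "\<dots> = (\<Prod>j\<in>UNIV. \<Sum>t\<in>UNIV. (if \<tau> j t = z j then 1 else 0) * psi w ((- a $ j) * t))"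
    by (rule vec_sum_prod)
  also have "\<dots> = (\<Prod>j\<in>UNIV. \<Sum>t\<in>{t. \<tau> j t = z j}. psi w ((- a $ j) * t))"
  proof (rule prod.cong[OF refl])
    fix j
    have "(\<Sum>t\<in>UNIV. (if \<tau> j t = z j then 1 else 0) * psi w ((- a $ j) * t))
        = (\<Sum>t\<in>UNIV. if \<tau> j t = z j then psi w ((- a $ j) * t) else 0)"
      by (intro sum.cong) auto
    also have "\<dots> = (\<Sum>t\<in>{t\<in>UNIV. \<tau> j t = z j}. psi w ((- a $ j) * t))"
      by (rule sum.inter_filter[symmetric]) simp
    finally show "(\<Sum>t\<in>UNIV. (if \<tau> j t = z j then 1 else 0) * psi w ((- a $ j) * t))
        = (\<Sum>t\<in>{t. \<tau> j t = z j}. psi w ((- a $ j) * t))" by simp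
  qed
  finally show ?thesis .
qed

lemma coord_zero:
  fixes f :: "'a::{field,finite} \<Rightarrow> 'l"
  assumes H: "card (UNIV :: 'a set) = CHAR('a) ^ w" "w \<ge> 1"
  shows "(\<Sum>l\<in>range f. cmod (\<Sum>t\<in>{t. f t = l}. psi w (0 * t))) = real (card (UNIV :: 'a set))"
proof -
  have "(\<Sum>l\<in>range f. cmod (\<Sum>t\<in>{t. f t = l}. psi w (0 * t))) = (\<Sum>l\<in>range f. real (card {t. f t = l}))"
    using psi_zero[OF H] by simp
  also have "\<dots> = (\<Sum>l\<in>range f. \<Sum>t\<in>{t\<in>UNIV. f t = l}. (1::real))" by simp
  also have "\<dots> = (\<Sum>t\<in>(UNIV::'a set). (1::real))" by (rule sum.group) auto
  finally show ?thesis by simp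
qed

lemma card_range_lists:
  assumes "\<And>x. length (g x) = mu"
  shows "card (range (g :: 'a::finite \<Rightarrow> bool list)) \<le> 2 ^ mu"
proof -
  have "range g \<subseteq> {xs. set xs \<subseteq> UNIV \<and> length xs = mu}" using assms by auto
  hence "card (range g) \<le> card {xs. set xs \<subseteq> (UNIV :: bool set) \<and> length xs = mu}"
    by (rule card_mono[rotated]) (use finite_lists_length_eq[of "UNIV::bool set" mu] in simp)
  also have "\<dots> = 2 ^ mu" using card_lists_length_eq[of "UNIV::bool set" mu] by simp
  finally show ?thesis .
qed


theorem theorem4p1:
  fixes p w \<mu> k :: nat
    and C :: "('a::{field,finite} ^ 'n) set"
    and \<tau> :: "'n \<Rightarrow> 'a \<Rightarrow> bool list"
  assumes "prime p" and "w \<ge> 1" and "CARD('a) = p ^ w"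
    and "\<mu> \<ge> 1" and "2 ^ \<mu> < p"
    and "vec.subspace C" and "vec.dim C = k"
    and "\<And>j x. length (\<tau> j x) = \<mu>"
  shows "SD (tau_dist \<tau> C) (tau_dist \<tau> UNIV)
         \<le> (1/2) * real p ^ (w * (CARD('n) - k))
           * ((2 ^ \<mu> * sin (pi / 2 ^ \<mu>)) / (real p * sin (pi / real p))) ^ min_dist (dual_code C)"
proof -
  note pr = assms(1) and w1 = assms(2) and cardA = assms(3) and mup = assms(5)
    and V = assms(6) and dimC = assms(7) and len = assms(8)
  have CH: "CHAR('a) = p" by (rule CHAR_eq_p[OF pr cardA w1])
  have H: "card (UNIV :: 'a set) = CHAR('a) ^ w" "w \<ge> 1" using cardA CH w1 by simp_all
  have p2: "p \<ge> 2" using pr prime_ge_2_nat by blast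
  define q where "q = card (UNIV :: 'a set)"
  define N where "N = card (UNIV :: ('a^'n) set)"
  have Nq: "N = q ^ CARD('n)" unfolding N_def q_def by simp
  have q0: "q > 0" unfolding q_def by simp
  define cc where "cc = (2 ^ \<mu> * sin (pi / 2 ^ \<mu>)) / (real p * sin (pi / real p))"
  have sp: "sin (pi / real p) > 0" using p2 by (intro sin_gt_zero) (auto simp: field_simps)
  have den: "0 < real p * sin (pi / real p)" using sp p2 by (intro mult_pos_pos) auto
  have num: "0 \<le> (2::real) ^ \<mu> * sin (pi / 2 ^ \<mu>)"
    by (intro mult_nonneg_nonneg sin_ge_zero) (auto simp: field_simps)
  have cc0: "0 \<le> cc" unfolding cc_def using den num by simp
  have cc1: "cc \<le> 1"
  proof -
    have "(2::real) ^ \<mu> * sin (pi / 2 ^ \<mu>) \<le> real p * sin (pi / real p)"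
      using xsin_mono[of "2 ^ \<mu>" "real p"] mup by (simp add: less_imp_le)
    thus ?thesis unfolding cc_def using sp p2 by simp
  qed
  define tv where "tv x = (\<lambda>j. \<tau> j (x $ j))" for x :: "'a^'n"
  define D where "D = dual_code C - {0}"
  define T where "T j b l = (\<Sum>t\<in>{t. \<tau> j t = l}. psi w (b * t))" for j b l
  define I where "I z x = (if tv x = z then 1 else 0 :: complex)" for z x
  have finC: "finite C" by simp
  have C0: "0 \<in> C" by (rule vec.subspace_0[OF V])
  have Cne: "C \<noteq> {}" using C0 by blast
  have dual0: "0 \<in> dual_code C" unfolding dual_code_def by simp
  have hat: "(\<Sum>y\<in>UNIV. I z y * psi w (- dotp y a)) = (\<Prod>j\<in>UNIV. T j (- a $ j) (z j))" for z a
    unfolding I_def tv_def T_def by (rule hat_factor[OF H])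
  have cnt: "(\<Sum>x\<in>S. I z x) = of_nat (card {x\<in>S. tv x = z})" if "finite S" for S z
  proof -
    have "(\<Sum>x\<in>{x\<in>S. tv x = z}. (1::complex)) = (\<Sum>x\<in>S. if tv x = z then 1 else 0)"
      by (rule sum.inter_filter[OF that])
    hence "(\<Sum>x\<in>S. I z x) = (\<Sum>x\<in>{x\<in>S. tv x = z}. 1)"
      unfolding I_def by simp
    thus ?thesis by simp
  qed
  have diff: "\<bar>pmf (tau_dist \<tau> C) z - pmf (tau_dist \<tau> UNIV) z\<bar>
      \<le> (1 / real N) * (\<Sum>a\<in>D. \<Prod>j\<in>UNIV. cmod (T j (- a $ j) (z j)))" for z
  proof -
    define F where "F a = (\<Prod>j\<in>UNIV. T j (- a $ j) (z j))" for a :: "'a^'n"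
    have PX: "complex_of_real (pmf (tau_dist \<tau> C) z) = (\<Sum>a\<in>dual_code C. F a) / of_nat N"
    proof -
      have "complex_of_real (pmf (tau_dist \<tau> C) z) = of_nat (card {x\<in>C. tv x = z}) / of_nat (card C)"
        using pmf_tau[OF finC Cne, of \<tau> z] unfolding tv_def by simp
      also have "of_nat (card {x\<in>C. tv x = z}) = (\<Sum>x\<in>C. I z x)" using cnt[OF finC] by simp
      also have "\<dots> = of_nat (card C) / of_nat N * (\<Sum>a\<in>dual_code C. \<Sum>y\<in>UNIV. I z y * psi w (- dotp y a))"
        unfolding N_def by (rule poisson[OF H V])
      also have "(\<Sum>a\<in>dual_code C. \<Sum>y\<in>UNIV. I z y * psi w (- dotp y a)) = (\<Sum>a\<in>dual_code C. F a)"
        unfolding F_def hat ..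
      finally show ?thesis using Cne finC by (simp add: field_simps)
    qed
    have PY: "complex_of_real (pmf (tau_dist \<tau> UNIV) z) = F 0 / of_nat N"
    proof -
      have "complex_of_real (pmf (tau_dist \<tau> UNIV) z) = of_nat (card {x\<in>UNIV. tv x = z}) / of_nat N"
        using pmf_tau[of "UNIV :: ('a^'n) set" \<tau> z] unfolding tv_def N_def by simp
      also have "of_nat (card {x\<in>UNIV. tv x = z}) = (\<Sum>y\<in>UNIV. I z y)" using cnt[of UNIV] by simp
      also have "\<dots> = (\<Sum>y\<in>UNIV. I z y * psi w (- dotp y 0))"
        using psi_zero[OF H] by (simp add: dotp_def)
      also have "\<dots> = F 0" unfolding F_def hat ..
      finally show ?thesis .
    qed
    have "(\<Sum>a\<in>dual_code C. F a) = F 0 + (\<Sum>a\<in>D. F a)"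
      unfolding D_def using dual0 by (simp add: sum.remove)
    hence "complex_of_real (pmf (tau_dist \<tau> C) z - pmf (tau_dist \<tau> UNIV) z) = (\<Sum>a\<in>D. F a) / of_nat N"
      using PX PY by (simp add: add_divide_distrib)
    hence "\<bar>pmf (tau_dist \<tau> C) z - pmf (tau_dist \<tau> UNIV) z\<bar> = cmod ((\<Sum>a\<in>D. F a) / of_nat N)"
      by (metis norm_of_real)
    also have "\<dots> = cmod (\<Sum>a\<in>D. F a) / real N" by (simp add: norm_divide)
    also have "\<dots> \<le> (\<Sum>a\<in>D. cmod (F a)) / real N"
      by (intro divide_right_mono norm_sum) simp
    also have "(\<Sum>a\<in>D. cmod (F a)) = (\<Sum>a\<in>D. \<Prod>j\<in>UNIV. cmod (T j (- a $ j) (z j)))"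
      unfolding F_def by (simp add: prod_norm)
    finally show ?thesis by simp
  qed
  have coord: "(\<Sum>l\<in>range (\<tau> j). cmod (T j (- a $ j) l)) \<le> (if a $ j = 0 then real q else real q * cc)"
    for j a
  proof (cases "a $ j = 0")
    case True
    have "(\<Sum>l\<in>range (\<tau> j). cmod (T j (- a $ j) l)) = real q"
      unfolding T_def True q_def using coord_zero[OF H, of "\<tau> j"] by simp
    thus ?thesis using True by simp
  next
    case False
    have "(\<Sum>l\<in>range (\<tau> j). cmod (T j (- a $ j) l))
        \<le> real q / real CHAR('a) * (real (2 ^ \<mu>) * sin (pi / real (2 ^ \<mu>)) / sin (pi / real CHAR('a)))"
      unfolding T_def q_def
      by (rule coord_bound[OF H]) (use False card_range_lists[of "\<tau> j" \<mu>] len in auto)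
    also have "\<dots> = real q * cc" unfolding cc_def CH by (simp add: field_simps)
    finally show ?thesis using False by simp
  qed
  have prodw: "(\<Prod>j\<in>UNIV. if a $ j = 0 then real q else real q * cc) = real q ^ CARD('n) * cc ^ hweight a"
    for a :: "'a^'n"
  proof -
    have "(\<Prod>j\<in>UNIV. if a $ j = 0 then real q else real q * cc)
        = (\<Prod>j\<in>UNIV. real q * (if a $ j = 0 then 1 else cc))" by (intro prod.cong) auto
    also have "\<dots> = real q ^ CARD('n) * (\<Prod>j\<in>UNIV. if a $ j = 0 then 1 else cc)"
      by (simp add: prod.distrib)
    also have "(\<Prod>j\<in>UNIV. if a $ j = 0 then 1 else cc) = cc ^ card (UNIV \<inter> - {j. a $ j = 0})"
      by (simp add: prod.If_cases)
    also have "UNIV \<inter> - {j. a $ j = 0} = {j. a $ j \<noteq> 0}" by auto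
    finally show ?thesis unfolding hweight_def .
  qed
  define Z where "Z = PiE UNIV (\<lambda>j. range (\<tau> j))"
  have finZ: "finite Z" unfolding Z_def by (intro finite_PiE) auto
  have supp: "set_pmf (tau_dist \<tau> C) \<union> set_pmf (tau_dist \<tau> UNIV) \<subseteq> Z"
    unfolding Z_def using set_tau[OF finC Cne, of \<tau>] set_tau[of "UNIV :: ('a^'n) set" \<tau>]
    by (auto simp: PiE_UNIV_domain)
  have "SD (tau_dist \<tau> C) (tau_dist \<tau> UNIV)
      = (1/2) * (\<Sum>z\<in>set_pmf (tau_dist \<tau> C) \<union> set_pmf (tau_dist \<tau> UNIV).
                   \<bar>pmf (tau_dist \<tau> C) z - pmf (tau_dist \<tau> UNIV) z\<bar>)"
    unfolding SD_def ..
  also have "\<dots> \<le> (1/2) * (\<Sum>z\<in>Z. \<bar>pmf (tau_dist \<tau> C) z - pmf (tau_dist \<tau> UNIV) z\<bar>)"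
    by (intro mult_left_mono sum_mono2 finZ supp) auto
  also have "\<dots> \<le> (1/2) * (\<Sum>z\<in>Z. (1 / real N) * (\<Sum>a\<in>D. \<Prod>j\<in>UNIV. cmod (T j (- a $ j) (z j))))"
    by (intro mult_left_mono sum_mono diff) auto
  also have "\<dots> = (1/2) * (1 / real N) * (\<Sum>a\<in>D. \<Sum>z\<in>Z. \<Prod>j\<in>UNIV. cmod (T j (- a $ j) (z j)))"
    by (simp add: sum_distrib_left sum.swap[of _ Z])
  also have "\<dots> = (1/2) * (1 / real N) * (\<Sum>a\<in>D. \<Prod>j\<in>UNIV. \<Sum>l\<in>range (\<tau> j). cmod (T j (- a $ j) l))"
    unfolding Z_def by (simp add: prod_sum_PiE)
  also have "\<dots> \<le> (1/2) * (1 / real N) * (\<Sum>a\<in>D. \<Prod>j\<in>UNIV. if a $ j = 0 then real q else real q * cc)"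
    by (intro mult_left_mono sum_mono prod_mono conjI coord sum_nonneg) auto
  also have "\<dots> = (1/2) * (\<Sum>a\<in>D. cc ^ hweight a)"
    using q0 by (simp add: prodw Nq sum_distrib_left)
  also have "\<dots> \<le> (1/2) * (real (card D) * cc ^ min_dist (dual_code C))"
  proof -
    have "cc ^ hweight a \<le> cc ^ min_dist (dual_code C)" if "a \<in> D" for a
    proof (rule power_decreasing[OF _ cc0 cc1])
      have ne: "dual_code C - {0} \<noteq> {}" using that D_def by auto
      have "min_dist (dual_code C) = Min (hweight ` (dual_code C - {0}))"
        unfolding min_dist_def using ne by simp
      also have "\<dots> \<le> hweight a" using that unfolding D_def by (intro Min_le) auto
      finally show "min_dist (dual_code C) \<le> hweight a" .
    qed
    hence "(\<Sum>a\<in>D. cc ^ hweight a) \<le> real (card D) * cc ^ min_dist (dual_code C)"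
      using sum_bounded_above[of D "\<lambda>a. cc ^ hweight a" "cc ^ min_dist (dual_code C)"] by simp
    thus ?thesis by simp
  qed
  also have "\<dots> \<le> (1/2) * (real p ^ (w * (CARD('n) - k)) * cc ^ min_dist (dual_code C))"
  proof -
    have cD: "card D \<le> card (dual_code C)" unfolding D_def by (rule card_mono) auto
    have prodc: "card C * card (dual_code C) = q ^ CARD('n)"
      using card_dual[OF H V] unfolding q_def by simp
    have ge: "q ^ k \<le> card C" using card_subspace_ge[OF V] dimC unfolding q_def by simp
    have q1: "q > 1" unfolding q_def using cardA p2 w1
      by (metis One_nat_def less_le_trans one_less_power Suc_1 Suc_le_lessD)
    have "q ^ k \<le> q ^ CARD('n)" using ge prodc card_dual[OF H V]
      by (metis card_mono dual0 empty_iff finite_UNIV_card_ge_0 le_trans mult_le_mono1 mult.commute nat_mult_1 subset_UNIV finite mult_le_cancel1 prodc Nat.le0 Suc_leI card_gt_0_iff)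
    hence kn: "k \<le> CARD('n)" using power_le_imp_le_exp[OF q1] by blast
    have "card (dual_code C) * q ^ k \<le> card (dual_code C) * card C" using ge by simp
    also have "\<dots> = q ^ (CARD('n) - k) * q ^ k" using prodc kn by (simp add: mult.commute power_add[symmetric])
    finally have "card (dual_code C) \<le> q ^ (CARD('n) - k)" using q0 by simp
    hence "real (card D) \<le> real q ^ (CARD('n) - k)" using cD by (metis of_nat_le_iff of_nat_power le_trans)
    also have "real q ^ (CARD('n) - k) = real p ^ (w * (CARD('n) - k))"
      unfolding q_def cardA by (simp add: power_mult)
    finally show ?thesis using cc0 by (intro mult_left_mono mult_right_mono) auto
  qed
  finally show ?thesis unfolding cc_def by simp
qed


end
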